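(* Let $\mathcal{X}$ be a real Hilbert space, let $\mathbb{A},\mathbb{B},\mathbb{C}:\mathcal{X}\to 2^{\mathcal{X}}$ be maximal monotone operators with $\mathbb{C}$ $\beta$-cocoercive ($\beta>0$), let $\gamma\in(0,2\beta]$, and let $$T=\mathbb{J}_{\gamma\mathbb{C}}\circ\big(\mathbb{J}_{\gamma \mathbb{A}}\circ(2\mathbb{J}_{\gamma \mathbb{B}}-I-\gamma \mathbb{C}\mathbb{J}_{\gamma \mathbb{B}})+\gamma \mathbb{C}\mathbb{J}_{\gamma \mathbb{B}}\big)+ (I-\mathbb{J}_{\gamma \mathbb{B}}).$$ Assume $T$ is $a$-averaged with $a=\frac{2\beta}{4\beta-\gamma}<1$. Let $z^0\in\mathcal{X}$ and let $(z^j)_{j\ge0}$ be generated by: for $k=0,1,\dots$, $x^k_{\mathbb{B}}=\mathbb{J}_{\gamma\mathbb{B}}(z^k)$, $x^k_{\mathbb{A}}=\mathbb{J}_{\gamma\mathbb{A}}(2x^k_{\mathbb{B}}-z^k-\gamma\mathbb{C}x^k_{\mathbb{B}})$, $x^k_{\mathbb{C}}=\mathbb{J}_{\gamma\mathbb{C}}(x^k_{\mathbb{A}}+\gamma\mathbb{C}x^k_{\mathbb{B}})$, $z^{k+1}=z^k+\lambda_k(x^k_{\mathbb{C}}-x^k_{\mathbb{B}})$, with $\lambda_k\in(0,(4\beta-\gamma)/(2\beta))$. Let $z^*$ be a fixed point of $T$ and $x^*=\mathbb{J}_{\gamma\mathbb{B}}(z^* )$. Then $(x^j_{\mathbb{A}})_{j\ge0}$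 and $(x^j_{\mathbb{B}})_{j\ge0}$ are contained in the closed ball $\overline{B}\big(x^*,(1+\gamma/\beta)\|z^0-z^*\|\big)$.
   Context: $\mathbb{J}_M=(I+M)^{-1}$ is the resolvent of $M$. $\mathbb{C}$ is $\beta$-cocoercive if $\langle u-v,x-y\rangle\ge\beta\|u-v\|^2$ for all $u\in\mathbb{C}x,v\in\mathbb{C}y$. A map $T$ is $a$-averaged if $T=(1-a)I+aN$ for some nonexpansive $N$. *)

theory Defs
  imports "HOL-Analysis.Analysis"
begin

definition monotone_op :: "('a::real_inner \<Rightarrow> 'a set) \<Rightarrow> bool" where
  "monotone_op M \<longleftrightarrow> (\<forall>x y u v. u \<in> M x \<longrightarrow> v \<in> M y \<longrightarrow> inner (u - v) (x - y) \<ge> 0)"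

definition maximal_monotone :: "('a::real_inner \<Rightarrow> 'a set) \<Rightarrow> bool" where
  "maximal_monotone M \<longleftrightarrow> monotone_op M \<and>
     (\<forall>x u. (\<forall>y v. v \<in> M y \<longrightarrow> inner (u - v) (x - y) \<ge> 0) \<longrightarrow> u \<in> M x)"

definition cocoercive :: "real \<Rightarrow> ('a::real_inner \<Rightarrow> 'a set) \<Rightarrow> bool" where
  "cocoercive \<beta> M \<longleftrightarrow> (\<forall>x y u v. u \<in> M x \<longrightarrow> v \<in> M y \<longrightarrow>
      inner (u - v) (x - y) \<ge> \<beta> * (norm (u - v))\<^sup>2)"

definition scale_op :: "real \<Rightarrow> ('a::real_vector \<Rightarrow> 'a set) \<Rightarrow> 'a \<Rightarrow> 'a set" where
  "scale_op \<gamma> M = (\<lambda>x. (\<lambda>v. \<gamma> *\<^sub>R v) ` M x)"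

text \<open>Resolvent J_M = (I + M)^{-1}; for maximal monotone M it is single-valued with full
  domain (Minty), so we take the unique y with x \<in> y + M y.\<close>
definition resolvent :: "('a::real_vector \<Rightarrow> 'a set) \<Rightarrow> 'a \<Rightarrow> 'a" where
  "resolvent M x = (THE y. x - y \<in> M y)"

definition nonexpansive :: "('a::real_normed_vector \<Rightarrow> 'a) \<Rightarrow> bool" where
  "nonexpansive N \<longleftrightarrow> (\<forall>x y. norm (N x - N y) \<le> norm (x - y))"

definition averaged :: "real \<Rightarrow> ('a::real_normed_vector \<Rightarrow> 'a) \<Rightarrow> bool" where
  "averaged a T \<longleftrightarrow> (\<exists>N. nonexpansive N \<and> T = (\<lambda>x. (1 - a) *\<^sub>R x + a *\<^sub>R N x))"

end

theory Submission
  imports Defs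
begin


definition ff :: "'a::real_inner \<times> 'a \<Rightarrow> 'a \<Rightarrow> real" where
  "ff p x = inner (snd p + x) (x - fst p)"
definition cc :: "'a::real_inner \<times> 'a \<Rightarrow> 'a" where
  "cc p = (1/2) *\<^sub>R (fst p - snd p)"

lemma ff_alt: "ff p z = (norm z)\<^sup>2 - 2 * inner z (cc p) - inner (snd p) (fst p)"
  unfolding ff_def cc_def
  by (simp add: power2_norm_eq_inner inner_diff_left inner_diff_right inner_add_left inner_add_right inner_commute algebra_simps)

lemma ff_move: "ff p (x0 + t *\<^sub>R d) = ff p x0 - 2 * t * inner d (cc p - x0) + t\<^sup>2 * (norm d)\<^sup>2"
  unfolding ff_def cc_def
  by (simp add: power2_norm_eq_inner inner_diff_left inner_diff_right inner_add_left inner_add_right inner_commute algebra_simps power2_eq_square)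
     (simp add: power2_eq_square[symmetric] power2_norm_eq_inner)

lemma continuous_ff: "continuous_on X (ff p)"
  unfolding ff_def by (intro continuous_intros)

lemma continuous_Max_ff:
  assumes "finite S" "S \<noteq> {}"
  shows "continuous_on X (\<lambda>x. Max ((\<lambda>p. ff p x) ` S))"
  using assms
proof (induction S rule: finite_ne_induct)
  case (singleton p) then show ?case by (simp add: continuous_ff)
next
  case (insert p S)
  have "(\<lambda>x. Max ((\<lambda>p. ff p x) ` insert p S)) = (\<lambda>x. max (ff p x) (Max ((\<lambda>p. ff p x) ` S)))"
    using insert by (simp add: Max_insert)
  then show ?case by (simp only:) (rule continuous_on_max[OF continuous_ff insert(4)])
qed

lemma DF_finite:
  fixes S :: "('a::real_inner \<times> 'a) set"
  assumes fin: "finite S" and ne: "S \<noteq> {}"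
    and mono: "\<And>p q. p \<in> S \<Longrightarrow> q \<in> S \<Longrightarrow> inner (snd p - snd q) (fst p - fst q) \<ge> 0"
  shows "\<exists>x0 m. m \<le> 0 \<and> (\<forall>p\<in>S. ff p x0 \<le> m) \<and> (\<forall>y. \<exists>p\<in>S. m + (norm (y - x0))\<^sup>2 \<le> ff p y)"
proof -
  define K where "K = convex hull (cc ` S)"
  define \<phi> where "\<phi> x = Max ((\<lambda>p. ff p x) ` S)" for x
  have Kc: "compact K" unfolding K_def using fin by (simp add: finite_imp_compact_convex_hull)
  have Kne: "K \<noteq> {}" unfolding K_def using ne by simp
  obtain x0 where x0K: "x0 \<in> K" and x0min: "\<forall>y\<in>K. \<phi> x0 \<le> \<phi> y"
    using continuous_attains_inf[OF Kc Kne continuous_Max_ff[OF fin ne, of K]] unfolding \<phi>_def by blast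
  define m where "m = \<phi> x0"
  have fle: "\<forall>p\<in>S. ff p x0 \<le> m" unfolding m_def \<phi>_def using fin by auto
  define I where "I = {p\<in>S. ff p x0 = m}"
  have Ine: "I \<noteq> {}"
  proof -
    have "m \<in> (\<lambda>p. ff p x0) ` S" unfolding m_def \<phi>_def using fin ne by (intro Max_in) auto
    then show ?thesis unfolding I_def by auto
  qed
  have Ifin: "finite I" "I \<subseteq> S" unfolding I_def using fin by auto
  have inhull: "x0 \<in> convex hull (cc ` I)"
  proof (rule ccontr)
    assume nin: "x0 \<notin> convex hull (cc ` I)"
    define KI where "KI = convex hull (cc ` I)"
    have KIc: "compact KI" unfolding KI_def using Ifin by (simp add: finite_imp_compact_convex_hull)
    have KIne: "KI \<noteq> {}" unfolding KI_def using Ine by simp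
    have "continuous_on KI (dist x0)" by (intro continuous_intros)
    then obtain p where pKI: "p \<in> KI" and pmin: "\<forall>z\<in>KI. dist x0 p \<le> dist x0 z"
      using continuous_attains_inf[OF KIc KIne, of "dist x0"] by blast
    define d where "d = p - x0"
    have dne: "d \<noteq> 0" using nin pKI unfolding d_def KI_def by auto
    have dpos: "(norm d)\<^sup>2 > 0" using dne by simp
    have dI: "inner d (cc q - x0) \<ge> (norm d)\<^sup>2" if "q \<in> I" for q
    proof -
      have "cc q \<in> KI" unfolding KI_def using that by (simp add: hull_inc)
      then have "inner (x0 - p) (cc q - p) \<le> 0"
        using any_closest_point_dot[of KI p "cc q" x0] pKI pmin KIc convex_convex_hull compact_imp_closed
        unfolding KI_def by auto
      moreover have "inner d (cc q - x0) = - inner (x0 - p) (cc q - p) + (norm d)\<^sup>2"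
        unfolding d_def by (simp add: power2_norm_eq_inner inner_diff_left inner_diff_right inner_commute algebra_simps)
      ultimately show ?thesis by simp
    qed
    have ev1: "eventually (\<lambda>t. 0 < t \<and> t \<le> 1) (at_right (0::real))"
      unfolding eventually_at_right_field by (rule exI[of _ 1]) auto
    have ev2: "eventually (\<lambda>t. \<forall>q\<in>S-I. ff q (x0 + t *\<^sub>R d) < m) (at_right (0::real))"
    proof (rule eventually_ball_finite)
      show "finite (S - I)" using fin by simp
      show "\<forall>q\<in>S-I. eventually (\<lambda>t. ff q (x0 + t *\<^sub>R d) < m) (at_right 0)"
      proof
        fix q assume q: "q \<in> S - I"
        then have lt: "ff q x0 < m" using fle unfolding I_def by force
        have "((\<lambda>t. ff q (x0 + t *\<^sub>R d)) \<longlongrightarrow> ff q (x0 + 0 *\<^sub>R d)) (at_right 0)"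
          unfolding ff_def by (intro tendsto_intros)
        then show "eventually (\<lambda>t. ff q (x0 + t *\<^sub>R d) < m) (at_right 0)"
          using order_tendstoD(2)[OF _ lt] by simp
      qed
    qed
    obtain t where t: "0 < t" "t \<le> 1" "\<forall>q\<in>S-I. ff q (x0 + t *\<^sub>R d) < m"
      using eventually_happens'[OF _ eventually_conj[OF ev1 ev2]] by auto
    have all: "\<forall>q\<in>S. ff q (x0 + t *\<^sub>R d) < m"
    proof
      fix q assume qS: "q \<in> S"
      show "ff q (x0 + t *\<^sub>R d) < m"
      proof (cases "q \<in> I")
        case True
        have "ff q (x0 + t *\<^sub>R d) = m - 2 * t * inner d (cc q - x0) + t\<^sup>2 * (norm d)\<^sup>2"
          using ff_move[of q x0 t d] True unfolding I_def by simp
        also have "\<dots> \<le> m - 2 * t * (norm d)\<^sup>2 + t\<^sup>2 * (norm d)\<^sup>2"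
          using dI[OF True] t by simp
        also have "\<dots> = m - t * (2 - t) * (norm d)\<^sup>2" by (simp add: algebra_simps power2_eq_square)
        also have "\<dots> < m" using t dpos by simp
        finally show ?thesis .
      next
        case False then show ?thesis using t qS by simp
      qed
    qed
    then have "\<phi> (x0 + t *\<^sub>R d) < m" unfolding \<phi>_def using fin ne by simp
    moreover have "x0 + t *\<^sub>R d \<in> K"
    proof -
      have "KI \<subseteq> K" unfolding KI_def K_def using Ifin by (intro hull_mono image_mono) 
      then have "p \<in> K" using pKI by auto
      then have "(1 - t) *\<^sub>R x0 + t *\<^sub>R p \<in> K"
        using convexD_alt[of K x0 p t] x0K t unfolding K_def by (auto simp: convex_convex_hull)
      moreover have "(1 - t) *\<^sub>R x0 + t *\<^sub>R p = x0 + t *\<^sub>R d" unfolding d_def by (simp add: algebra_simps)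
      ultimately show ?thesis by simp
    qed
    ultimately show False using x0min m_def by force
  qed
  define Y where "Y = cc ` I"
  have Yfin: "finite Y" unfolding Y_def using Ifin by simp
  obtain u where u0: "\<forall>y\<in>Y. 0 \<le> u y" and u1: "sum u Y = 1" and ux: "(\<Sum>y\<in>Y. u y *\<^sub>R y) = x0"
    using inhull convex_hull_finite[of "cc ` I"] Ifin unfolding Y_def by auto
  define r where "r y = inv_into I cc y" for y
  have rI: "r y \<in> I" "cc (r y) = y" if "y \<in> Y" for y
    using that unfolding r_def Y_def by (auto simp: inv_into_into f_inv_into_f)
  define a where "a y = fst (r y)" for y
  define v where "v y = snd (r y)" for y
  define A where "A = (\<Sum>y\<in>Y. u y *\<^sub>R a y)"
  define V where "V = (\<Sum>y\<in>Y. u y *\<^sub>R v y)"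
  define P where "P = (\<Sum>y\<in>Y. u y * inner (v y) (a y))"
  have x0AV: "x0 = (1/2) *\<^sub>R (A - V)"
  proof -
    have "x0 = (\<Sum>y\<in>Y. u y *\<^sub>R cc (r y))" using ux rI by simp
    also have "\<dots> = (\<Sum>y\<in>Y. (1/2) *\<^sub>R (u y *\<^sub>R a y - u y *\<^sub>R v y))"
      unfolding cc_def a_def v_def by (simp add: algebra_simps)
    also have "\<dots> = (1/2) *\<^sub>R (A - V)"
      unfolding A_def V_def by (simp add: scaleR_sum_right[symmetric] sum_subtractf)
    finally show ?thesis .
  qed
  have avg: "(\<Sum>y\<in>Y. u y * ff (r y) z) = (norm (z - x0))\<^sup>2 - (norm x0)\<^sup>2 - P" for z
  proof -
    have zx: "(\<Sum>y\<in>Y. u y * inner z y) = inner z x0"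
      unfolding ux[symmetric] by (simp add: inner_sum_right)
    have "(\<Sum>y\<in>Y. u y * ff (r y) z) = (\<Sum>y\<in>Y. u y * (norm z)\<^sup>2 - 2 * inner z (u y *\<^sub>R y) - u y * inner (v y) (a y))"
      unfolding ff_alt a_def v_def using rI by (intro sum.cong) (auto simp: algebra_simps)
    also have "\<dots> = (norm z)\<^sup>2 - 2 * inner z x0 - P"
      unfolding P_def using u1 ux zx
      by (simp add: sum_subtractf sum_distrib_right[symmetric] sum_distrib_left[symmetric] inner_sum_right[symmetric])
    also have "\<dots> = (norm (z - x0))\<^sup>2 - (norm x0)\<^sup>2 - P"
      by (simp add: power2_norm_eq_inner inner_diff_left inner_diff_right inner_commute)
    finally show ?thesis .
  qed
  have avg0: "(\<Sum>y\<in>Y. u y * ff (r y) x0) = m"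
  proof -
    have "(\<Sum>y\<in>Y. u y * ff (r y) x0) = (\<Sum>y\<in>Y. u y * m)"
      using rI unfolding I_def by (intro sum.cong) auto
    also have "\<dots> = m" using u1 by (simp add: sum_distrib_right[symmetric])
    finally show ?thesis .
  qed
  have mP: "m = - (norm x0)\<^sup>2 - P" using avg[of x0] avg0 by simp
  have B: "inner V A \<le> P"
  proof -
    have "0 \<le> (\<Sum>y\<in>Y. \<Sum>y'\<in>Y. u y * u y' * inner (v y - v y') (a y - a y'))"
    proof (intro sum_nonneg)
      fix y y' assume "y \<in> Y" "y' \<in> Y"
      then have "0 \<le> inner (v y - v y') (a y - a y')"
        using mono[of "r y" "r y'"] rI Ifin unfolding a_def v_def by auto
      then show "0 \<le> u y * u y' * inner (v y - v y') (a y - a y')"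
        using u0 \<open>y \<in> Y\<close> \<open>y' \<in> Y\<close> by simp
    qed
    also have "\<dots> = 2 * P - 2 * inner V A"
    proof -
      have e: "(\<Sum>y\<in>Y. \<Sum>y'\<in>Y. u y * u y' * inner (v y - v y') (a y - a y'))
        = (\<Sum>y\<in>Y. \<Sum>y'\<in>Y. u y * u y' * inner (v y) (a y)) + (\<Sum>y\<in>Y. \<Sum>y'\<in>Y. u y * u y' * inner (v y') (a y'))
          - (\<Sum>y\<in>Y. \<Sum>y'\<in>Y. u y * u y' * inner (v y) (a y')) - (\<Sum>y\<in>Y. \<Sum>y'\<in>Y. u y * u y' * inner (v y') (a y))"
        by (simp add: inner_diff_left inner_diff_right algebra_simps sum.distrib sum_subtractf)
      have t1: "(\<Sum>y\<in>Y. \<Sum>y'\<in>Y. u y * u y' * inner (v y) (a y)) = P"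
      proof -
        have "(\<Sum>y\<in>Y. \<Sum>y'\<in>Y. u y * u y' * inner (v y) (a y)) = (\<Sum>y\<in>Y. u y * inner (v y) (a y) * sum u Y)"
          by (intro sum.cong refl) (simp add: sum_distrib_left sum_distrib_right mult_ac)
        then show ?thesis using u1 P_def by simp
      qed
      have t2: "(\<Sum>y\<in>Y. \<Sum>y'\<in>Y. u y * u y' * inner (v y') (a y')) = P"
      proof -
        have "(\<Sum>y\<in>Y. \<Sum>y'\<in>Y. u y * u y' * inner (v y') (a y')) = (\<Sum>y\<in>Y. u y * P)"
          unfolding P_def by (intro sum.cong refl) (simp add: sum_distrib_left mult_ac)
        then show ?thesis using u1 by (simp add: sum_distrib_right[symmetric])
      qed
      have t4: "(\<Sum>y\<in>Y. \<Sum>y'\<in>Y. u y * u y' * inner (v y') (a y)) = inner V A"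
        unfolding V_def A_def by (simp add: inner_sum_left inner_sum_right sum_distrib_left mult_ac)
      have t3: "(\<Sum>y\<in>Y. \<Sum>y'\<in>Y. u y * u y' * inner (v y) (a y')) = inner V A"
        using t4 by (subst sum.swap) (simp add: mult_ac)
      show ?thesis using e t1 t2 t3 t4 by simp
    qed
    finally show ?thesis by simp
  qed
  have m0: "m \<le> 0"
  proof -
    have "m = - (1/4) * (norm (A - V))\<^sup>2 - P" using mP x0AV by (simp add: power2_eq_square)
    also have "\<dots> \<le> - (1/4) * (norm (A - V))\<^sup>2 - inner V A" using B by simp
    also have "\<dots> = - (1/4) * (norm (A + V))\<^sup>2"
      by (simp add: power2_norm_eq_inner inner_diff_left inner_diff_right inner_add_left inner_add_right inner_commute algebra_simps)
    also have "\<dots> \<le> 0" by simp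
    finally show ?thesis .
  qed
  have ex: "\<exists>p\<in>S. m + (norm (z - x0))\<^sup>2 \<le> ff p z" for z
  proof (rule ccontr)
    assume "\<not> ?thesis"
    then have lt: "\<forall>y\<in>Y. ff (r y) z < m + (norm (z - x0))\<^sup>2" using rI Ifin by force
    obtain y0 where y0: "y0 \<in> Y" "u y0 > 0"
    proof -
      have "\<exists>y\<in>Y. u y \<noteq> 0" using u1 by (metis sum.neutral zero_neq_one)
      then show ?thesis using that u0 by force
    qed
    have "(\<Sum>y\<in>Y. u y * ff (r y) z) < (\<Sum>y\<in>Y. u y * (m + (norm (z - x0))\<^sup>2))"
    proof (rule sum_strict_mono_ex1[OF Yfin])
      show "\<forall>y\<in>Y. u y * ff (r y) z \<le> u y * (m + (norm (z - x0))\<^sup>2)"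
        using lt u0 by (simp add: mult_left_mono less_imp_le)
      show "\<exists>y\<in>Y. u y * ff (r y) z < u y * (m + (norm (z - x0))\<^sup>2)"
        using lt y0 by (intro bexI[of _ y0]) auto
    qed
    also have "\<dots> = m + (norm (z - x0))\<^sup>2" using u1 by (simp add: sum_distrib_right[symmetric])
    finally show False using avg[of z] mP by simp
  qed
  show ?thesis using m0 fle ex by blast
qed



lemma minty0:
  fixes M :: "'a::{real_inner,complete_space} \<Rightarrow> 'a set"
  assumes mm: "maximal_monotone M"
  shows "\<exists>x. w - x \<in> M x"
proof -
  define G where "G = {(a, v - w) | a v. v \<in> M a}"
  have mon: "monotone_op M" using mm by (simp add: maximal_monotone_def)
  have Gmono: "inner (snd p - snd q) (fst p - fst q) \<ge> 0" if pG: "p \<in> G" and qG: "q \<in> G" for p q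
  proof -
    obtain a v b u where "p = (a, v - w)" "q = (b, u - w)" "v \<in> M a" "u \<in> M b"
      using pG qG unfolding G_def by blast
    then show ?thesis using mon unfolding monotone_op_def by auto
  qed
  obtain a0 v0 where a0: "v0 \<in> M a0"
  proof -
    have "\<exists>a v. v \<in> M a"
    proof (rule ccontr)
      assume nn: "\<not> (\<exists>a v. v \<in> M a)"
      then have "\<forall>y v. v \<in> M y \<longrightarrow> 0 \<le> inner (0 - v) (0 - y)" by blast
      then have "0 \<in> M 0" using mm unfolding maximal_monotone_def by blast
      then show False using nn by blast
    qed
    then show ?thesis using that by blast
  qed
  define g0 where "g0 = (a0, v0 - w)"
  have g0G: "g0 \<in> G" unfolding G_def g0_def using a0 by blast
  define FF where "FF = {F. finite F \<and> F \<noteq> {} \<and> F \<subseteq> G}"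
  have "\<forall>F\<in>FF. \<exists>xm. snd xm \<le> 0 \<and> (\<forall>p\<in>F. ff p (fst xm) \<le> snd xm) \<and>
      (\<forall>y. \<exists>p\<in>F. snd xm + (norm (y - fst xm))\<^sup>2 \<le> ff p y)"
  proof
    fix F assume "F \<in> FF"
    then have "finite F" "F \<noteq> {}" "F \<subseteq> G" unfolding FF_def by auto
    then obtain x m where "m \<le> 0 \<and> (\<forall>p\<in>F. ff p x \<le> m) \<and> (\<forall>y. \<exists>p\<in>F. m + (norm (y - x))\<^sup>2 \<le> ff p y)"
      using DF_finite[of F] Gmono by blast
    then show "\<exists>xm. snd xm \<le> 0 \<and> (\<forall>p\<in>F. ff p (fst xm) \<le> snd xm) \<and>
      (\<forall>y. \<exists>p\<in>F. snd xm + (norm (y - fst xm))\<^sup>2 \<le> ff p y)" by (intro exI[of _ "(x, m)"]) simp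
  qed
  from bchoice[OF this] obtain h where h0: "\<forall>F\<in>FF. snd (h F) \<le> 0 \<and> (\<forall>p\<in>F. ff p (fst (h F)) \<le> snd (h F)) \<and>
      (\<forall>y. \<exists>p\<in>F. snd (h F) + (norm (y - fst (h F)))\<^sup>2 \<le> ff p y)"
    by blast
  have h: "snd (h F) \<le> 0 \<and> (\<forall>p\<in>F. ff p (fst (h F)) \<le> snd (h F)) \<and>
      (\<forall>y. \<exists>p\<in>F. snd (h F) + (norm (y - fst (h F)))\<^sup>2 \<le> ff p y)" if "F \<in> FF" for F
    using h0 that by blast
  define X where "X F = fst (h F)" for F
  define mv where "mv F = snd (h F)" for F
  have mv0: "mv F \<le> 0" if "F \<in> FF" for F using h[OF that] mv_def by simp
  have Xle: "\<forall>p\<in>F. ff p (X F) \<le> mv F" if "F \<in> FF" for F using h[OF that] X_def mv_def by simp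
  have Xmin: "\<exists>p\<in>F. mv F + (norm (y - X F))\<^sup>2 \<le> ff p y" if "F \<in> FF" for F y
    using h[OF that] X_def mv_def by simp
  have key: "mv F + (norm (X F' - X F))\<^sup>2 \<le> mv F'" if k1: "F \<in> FF" and k2: "F' \<in> FF" and k3: "F \<subseteq> F'" for F F'
  proof -
    obtain p where "p \<in> F" "mv F + (norm (X F' - X F))\<^sup>2 \<le> ff p (X F')" using Xmin[OF k1] by blast
    moreover have "ff p (X F') \<le> mv F'" using Xle[OF k2] \<open>p \<in> F\<close> k3 by auto
    ultimately show ?thesis by simp
  qed
  have FFne: "{g0} \<in> FF" unfolding FF_def using g0G by simp
  define s where "s = Sup (mv ` FF)"
  have bdd: "bdd_above (mv ` FF)" using mv0 by (intro bdd_aboveI[of _ 0]) auto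
  have les: "mv F \<le> s" if "F \<in> FF" for F unfolding s_def using bdd that by (auto intro: cSUP_upper)
  have s0: "s \<le> 0" unfolding s_def using FFne mv0 by (auto intro: cSUP_least)
  have "\<forall>n. \<exists>F. F \<in> FF \<and> s - inverse (real (Suc n)) < mv F"
  proof
    fix n :: nat
    have "s - inverse (real (Suc n)) < s" by simp
    moreover have "mv ` FF \<noteq> {}" using FFne by blast
    ultimately have "\<exists>x\<in>mv ` FF. s - inverse (real (Suc n)) < x"
      unfolding s_def using less_cSup_iff[of "mv ` FF"] bdd by blast
    then show "\<exists>F. F \<in> FF \<and> s - inverse (real (Suc n)) < mv F" by blast
  qed
  from choice[OF this] obtain Fp where Fp0: "\<forall>n. Fp n \<in> FF \<and> s - inverse (real (Suc n)) < mv (Fp n)" by blast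
  have Fp: "\<And>n. Fp n \<in> FF" "\<And>n. s - inverse (real (Suc n)) < mv (Fp n)" using Fp0 by auto
  define Fn where "Fn n = insert g0 (\<Union>k\<le>n. Fp k)" for n
  have FnFF: "Fn n \<in> FF" for n using Fp(1) g0G unfolding Fn_def FF_def by auto
  have Fnmono: "Fn n \<subseteq> Fn n'" if "n \<le> n'" for n n' unfolding Fn_def using that by auto
  have Fnbig: "s - inverse (real (Suc n)) < mv (Fn n)" for n
  proof -
    have "Fp n \<subseteq> Fn n" unfolding Fn_def by auto
    then have "mv (Fp n) + (norm (X (Fn n) - X (Fp n)))\<^sup>2 \<le> mv (Fn n)" using key[OF Fp(1) FnFF] by blast
    moreover have "0 \<le> (norm (X (Fn n) - X (Fp n)))\<^sup>2" by simp
    ultimately have "mv (Fp n) \<le> mv (Fn n)" by linarith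
    then show ?thesis using Fp(2)[of n] by simp
  qed
  have close: "(norm (X F - X (Fn n)))\<^sup>2 < inverse (real (Suc n))" if "F \<in> FF" "Fn n \<subseteq> F" for F n
    using key[OF FnFF that(1) that(2)] les[OF that(1)] Fnbig[of n] by simp
  define xs where "xs n = X (Fn n)" for n
  have "Cauchy xs"
  proof (rule CauchyI)
    fix e :: real assume e: "0 < e"
    then have "0 < (e/2)\<^sup>2" by simp
    then obtain N :: nat where N: "N \<noteq> 0" "inverse (real N) < (e/2)\<^sup>2"
      using real_arch_inverse[THEN iffD1, OF \<open>0 < (e/2)\<^sup>2\<close>] by blast
    have Nb: "inverse (real (Suc N)) < (e/2)\<^sup>2"
    proof -
      have "inverse (real (Suc N)) \<le> inverse (real N)" using N by (intro le_imp_inverse_le) auto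
      then show ?thesis using N(2) by linarith
    qed
    have half: "norm (xs m - xs N) < e/2" if "m \<ge> N" for m
    proof -
      have "(norm (xs m - xs N))\<^sup>2 < (e/2)\<^sup>2"
        using close[OF FnFF Fnmono[OF that]] Nb unfolding xs_def by simp
      moreover have "0 \<le> e/2" using e by simp
      ultimately show ?thesis by (rule power_less_imp_less_base)
    qed
    show "\<exists>M. \<forall>m\<ge>M. \<forall>n\<ge>M. norm (xs m - xs n) < e"
    proof (intro exI allI impI)
      fix m n assume "N \<le> m" "N \<le> n"
      have "xs m - xs n = (xs m - xs N) - (xs n - xs N)" by simp
      then have "norm (xs m - xs n) \<le> norm (xs m - xs N) + norm (xs n - xs N)"
        using norm_triangle_ineq4[of "xs m - xs N" "xs n - xs N"] by simp
      then show "norm (xs m - xs n) < e" using half[OF \<open>N \<le> m\<close>] half[OF \<open>N \<le> n\<close>] by simp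
    qed
  qed
  then have "convergent xs" by (rule Cauchy_convergent)
  then obtain xl where xl: "xs \<longlonglongrightarrow> xl" unfolding convergent_def by blast
  have fin: "ff g xl \<le> 0" if gG: "g \<in> G" for g
  proof -
    define yn where "yn n = X (insert g (Fn n))" for n
    have yFF: "insert g (Fn n) \<in> FF" for n using FnFF[of n] gG unfolding FF_def by auto
    have "(\<lambda>n. yn n - xs n) \<longlonglongrightarrow> 0"
    proof (rule Lim_null_comparison)
      show "\<forall>\<^sub>F n in sequentially. norm (yn n - xs n) \<le> sqrt (inverse (real (Suc n)))"
      proof (rule always_eventually, rule allI)
        fix n
        have "Fn n \<subseteq> insert g (Fn n)" by blast
        then have "(norm (yn n - xs n))\<^sup>2 < inverse (real (Suc n))"
          using close[OF yFF[of n]] unfolding yn_def xs_def by blast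
        then show "norm (yn n - xs n) \<le> sqrt (inverse (real (Suc n)))"
          by (intro real_le_rsqrt less_imp_le)
      qed
      show "(\<lambda>n. sqrt (inverse (real (Suc n)))) \<longlonglongrightarrow> 0"
        using tendsto_real_sqrt[OF LIMSEQ_inverse_real_of_nat] by simp
    qed
    then have "(\<lambda>n. (yn n - xs n) + xs n) \<longlonglongrightarrow> 0 + xl" using xl by (intro tendsto_add)
    then have yl: "yn \<longlonglongrightarrow> xl" by simp
    have "(\<lambda>n. ff g (yn n)) \<longlonglongrightarrow> ff g xl" unfolding ff_def using yl by (intro tendsto_intros)
    moreover have "\<forall>\<^sub>F n in sequentially. ff g (yn n) \<le> 0"
    proof (rule always_eventually, rule allI)
      fix n
      have "ff g (yn n) \<le> mv (insert g (Fn n))" using Xle[OF yFF] unfolding yn_def by simp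
      also have "\<dots> \<le> 0" using mv0[OF yFF] .
      finally show "ff g (yn n) \<le> 0" .
    qed
    ultimately show ?thesis by (rule tendsto_upperbound[OF _ _ trivial_limit_sequentially])
  qed
  have "\<forall>y v. v \<in> M y \<longrightarrow> 0 \<le> inner ((w - xl) - v) (xl - y)"
  proof (intro allI impI)
    fix y v assume "v \<in> M y"
    then have "(y, v - w) \<in> G" unfolding G_def by blast
    then have "ff (y, v - w) xl \<le> 0" by (rule fin)
    moreover have "inner ((w - xl) - v) (xl - y) = - ff (y, v - w) xl"
      unfolding ff_def by (simp add: inner_diff_left inner_add_left algebra_simps)
    ultimately show "0 \<le> inner ((w - xl) - v) (xl - y)" by simp
  qed
  then have "w - xl \<in> M xl" using mm unfolding maximal_monotone_def by blast
  then show ?thesis by blast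
qed



lemma minty:
  fixes M :: "'a::{real_inner,complete_space} \<Rightarrow> 'a set"
  assumes "maximal_monotone M"
  shows "\<exists>x. w - x \<in> M x"
  using minty0[OF assms] .

lemma scale_mm:
  fixes M :: "'a::real_inner \<Rightarrow> 'a set"
  assumes mm: "maximal_monotone M" and g: "\<gamma> > 0"
  shows "maximal_monotone (scale_op \<gamma> M)"
  unfolding maximal_monotone_def
proof (intro conjI allI impI)
  have mon: "monotone_op M" using mm by (simp add: maximal_monotone_def)
  show "monotone_op (scale_op \<gamma> M)"
    unfolding monotone_op_def scale_op_def
  proof (intro allI impI)
    fix x y u v assume "u \<in> (*\<^sub>R) \<gamma> ` M x" "v \<in> (*\<^sub>R) \<gamma> ` M y"
    then obtain u' v' where uv: "u' \<in> M x" "v' \<in> M y" "u = \<gamma> *\<^sub>R u'" "v = \<gamma> *\<^sub>R v'" by auto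
    have "0 \<le> inner (u' - v') (x - y)" using mon uv unfolding monotone_op_def by blast
    then have "0 \<le> \<gamma> * inner (u' - v') (x - y)" using g by simp
    then show "0 \<le> inner (u - v) (x - y)" using uv by (simp add: algebra_simps inner_diff_left)
  qed
next
  fix x u assume H: "\<forall>y v. v \<in> scale_op \<gamma> M y \<longrightarrow> 0 \<le> inner (u - v) (x - y)"
  have "\<forall>y v. v \<in> M y \<longrightarrow> 0 \<le> inner ((1/\<gamma>) *\<^sub>R u - v) (x - y)"
  proof (intro allI impI)
    fix y v assume "v \<in> M y"
    then have "\<gamma> *\<^sub>R v \<in> scale_op \<gamma> M y" by (auto simp: scale_op_def)
    then have "0 \<le> inner (u - \<gamma> *\<^sub>R v) (x - y)" using H by blast
    also have "u - \<gamma> *\<^sub>R v = \<gamma> *\<^sub>R ((1/\<gamma>) *\<^sub>R u - v)" using g by (simp add: algebra_simps)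
    finally show "0 \<le> inner ((1/\<gamma>) *\<^sub>R u - v) (x - y)" using g
      by (simp add: zero_le_mult_iff)
  qed
  then have "(1/\<gamma>) *\<^sub>R u \<in> M x" using mm unfolding maximal_monotone_def by blast
  then show "u \<in> scale_op \<gamma> M x" unfolding scale_op_def
    by (intro image_eqI[where x="(1/\<gamma>) *\<^sub>R u"]) (use g in auto)
qed

lemma res_unique:
  fixes M :: "'a::real_inner \<Rightarrow> 'a set"
  assumes "monotone_op M" "w - y1 \<in> M y1" "w - y2 \<in> M y2"
  shows "y1 = y2"
proof -
  have "0 \<le> inner ((w - y1) - (w - y2)) (y1 - y2)" using assms unfolding monotone_op_def by blast
  also have "inner ((w - y1) - (w - y2)) (y1 - y2) = - (norm (y1 - y2))\<^sup>2"
    by (simp add: power2_norm_eq_inner inner_diff_left inner_diff_right inner_commute)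
  finally show ?thesis by simp
qed

lemma res_prop:
  fixes M :: "'a::{real_inner,complete_space} \<Rightarrow> 'a set"
  assumes "maximal_monotone M"
  shows "w - resolvent M w \<in> M (resolvent M w)"
proof -
  obtain x where x: "w - x \<in> M x" using minty[OF assms] by blast
  have mon: "monotone_op M" using assms by (simp add: maximal_monotone_def)
  have "resolvent M w = x" unfolding resolvent_def
    by (rule the_equality[where P="\<lambda>y. w - y \<in> M y", OF x]) (use res_unique[OF mon _ x] in blast)
  then show ?thesis using x by simp
qed

lemma res_eq:
  fixes M :: "'a::{real_inner,complete_space} \<Rightarrow> 'a set"
  assumes "maximal_monotone M" "w - y \<in> M y"
  shows "resolvent M w = y"
  using res_unique[OF _ res_prop[OF assms(1)] assms(2)] assms(1)
  by (simp add: maximal_monotone_def)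

lemma res_firm:
  fixes M :: "'a::{real_inner,complete_space} \<Rightarrow> 'a set"
  assumes "maximal_monotone M"
  shows "(norm (resolvent M w1 - resolvent M w2))\<^sup>2 \<le> inner (resolvent M w1 - resolvent M w2) (w1 - w2)"
proof -
  define p where "p = resolvent M w1"
  define q where "q = resolvent M w2"
  have "0 \<le> inner ((w1 - p) - (w2 - q)) (p - q)"
    using res_prop[OF assms, of w1] res_prop[OF assms, of w2] assms
    unfolding maximal_monotone_def monotone_op_def p_def q_def by blast
  also have "inner ((w1 - p) - (w2 - q)) (p - q) = inner (p - q) (w1 - w2) - (norm (p - q))\<^sup>2"
    by (simp add: power2_norm_eq_inner inner_diff_left inner_diff_right inner_commute)
  finally show ?thesis unfolding p_def q_def by simp
qed

lemma res_refl_ne: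
  fixes M :: "'a::{real_inner,complete_space} \<Rightarrow> 'a set"
  assumes "maximal_monotone M"
  shows "norm (2 *\<^sub>R (resolvent M w1 - resolvent M w2) - (w1 - w2)) \<le> norm (w1 - w2)"
proof -
  define d where "d = resolvent M w1 - resolvent M w2"
  have f: "(norm d)\<^sup>2 \<le> inner d (w1 - w2)" using res_firm[OF assms] d_def by simp
  have "(norm (2 *\<^sub>R d - (w1 - w2)))\<^sup>2 = 4 * (norm d)\<^sup>2 - 4 * inner d (w1 - w2) + (norm (w1 - w2))\<^sup>2"
    by (simp add: power2_norm_eq_inner inner_diff_left inner_diff_right inner_commute)
  also have "\<dots> \<le> (norm (w1 - w2))\<^sup>2" using f by simp
  finally show ?thesis unfolding d_def[symmetric] using power2_le_imp_le by fastforce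
qed

lemma res_ne:
  fixes M :: "'a::{real_inner,complete_space} \<Rightarrow> 'a set"
  assumes "maximal_monotone M"
  shows "norm (resolvent M w1 - resolvent M w2) \<le> norm (w1 - w2)"
proof -
  define d where "d = resolvent M w1 - resolvent M w2"
  have f: "(norm d)\<^sup>2 \<le> inner d (w1 - w2)" using res_firm[OF assms] d_def by simp
  also have "\<dots> \<le> norm d * norm (w1 - w2)" by (rule Cauchy_Schwarz_ineq2[THEN order_trans[OF abs_ge_self]])
  finally have "norm d * norm d \<le> norm d * norm (w1 - w2)" by (simp add: power2_eq_square)
  then show ?thesis unfolding d_def[symmetric]
    by (cases "norm d = 0") (auto simp: mult_le_cancel_left)
qed



theorem lemma3:
  fixes A B :: "'a::{real_inner, complete_space} \<Rightarrow> 'a set"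
    and C :: "'a \<Rightarrow> 'a"
    and \<beta> \<gamma> :: real
    and T :: "'a \<Rightarrow> 'a"
    and z xA xB xC :: "nat \<Rightarrow> 'a"
    and lam :: "nat \<Rightarrow> real"
    and zstar xstar :: 'a
  assumes mA: "maximal_monotone A"
    and mB: "maximal_monotone B"
    and mC: "maximal_monotone (\<lambda>x. {C x})"
    and beta_pos: "\<beta> > 0"
    and coco: "cocoercive \<beta> (\<lambda>x. {C x})"
    and gamma: "0 < \<gamma>" "\<gamma> \<le> 2 * \<beta>"
    and T_def: "T = (\<lambda>x. resolvent (scale_op \<gamma> (\<lambda>y. {C y}))
                   (resolvent (scale_op \<gamma> A)
                      (2 *\<^sub>R resolvent (scale_op \<gamma> B) x - x - \<gamma> *\<^sub>R C (resolvent (scale_op \<gamma> B) x))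
                    + \<gamma> *\<^sub>R C (resolvent (scale_op \<gamma> B) x))
                 + (x - resolvent (scale_op \<gamma> B) x))"
    and a_lt: "2 * \<beta> / (4 * \<beta> - \<gamma>) < 1"
    and T_avg: "averaged (2 * \<beta> / (4 * \<beta> - \<gamma>)) T"
    and xB_def: "\<And>k. xB k = resolvent (scale_op \<gamma> B) (z k)"
    and xA_def: "\<And>k. xA k = resolvent (scale_op \<gamma> A) (2 *\<^sub>R xB k - z k - \<gamma> *\<^sub>R C (xB k))"
    and xC_def: "\<And>k. xC k = resolvent (scale_op \<gamma> (\<lambda>y. {C y})) (xA k + \<gamma> *\<^sub>R C (xB k))"
    and z_step: "\<And>k. z (Suc k) = z k + lam k *\<^sub>R (xC k - xB k)"
    and lam: "\<And>k. 0 < lam k \<and> lam k < (4 * \<beta> - \<gamma>) / (2 * \<beta>)"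
    and fixpt: "T zstar = zstar"
    and xstar_def: "xstar = resolvent (scale_op \<gamma> B) zstar"
  shows "\<forall>j. xA j \<in> cball xstar ((1 + \<gamma> / \<beta>) * norm (z 0 - zstar)) \<and>
             xB j \<in> cball xstar ((1 + \<gamma> / \<beta>) * norm (z 0 - zstar))"
proof -
  define JA where "JA = resolvent (scale_op \<gamma> A)"
  define JB where "JB = resolvent (scale_op \<gamma> B)"
  define JC where "JC = resolvent (scale_op \<gamma> (\<lambda>y. {C y}))"
  have mmA: "maximal_monotone (scale_op \<gamma> A)" using scale_mm[OF mA gamma(1)] .
  have mmB: "maximal_monotone (scale_op \<gamma> B)" using scale_mm[OF mB gamma(1)] .
  have mmC: "maximal_monotone (scale_op \<gamma> (\<lambda>y. {C y}))" using scale_mm[OF mC gamma(1)] .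
  have JCprop: "v - JC v = \<gamma> *\<^sub>R C (JC v)" for v
    using res_prop[OF mmC, of v] unfolding JC_def by (simp add: scale_op_def)
  define R0 where "R0 = norm (z 0 - zstar)"
  define xAs where "xAs = JA (2 *\<^sub>R xstar - zstar - \<gamma> *\<^sub>R C xstar)"
  have "JC (xAs + \<gamma> *\<^sub>R C xstar) + (zstar - xstar) = zstar"
    using fixpt unfolding T_def xAs_def JA_def JC_def xstar_def by simp
  then have JCx: "JC (xAs + \<gamma> *\<^sub>R C xstar) = xstar" by (simp add: algebra_simps)
  have "xAs + \<gamma> *\<^sub>R C xstar - xstar = \<gamma> *\<^sub>R C xstar"
    using JCprop[of "xAs + \<gamma> *\<^sub>R C xstar"] unfolding JCx .
  then have xAs: "xAs = xstar" by (simp add: algebra_simps)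
  define a where "a = 2 * \<beta> / (4 * \<beta> - \<gamma>)"
  have den: "4 * \<beta> - \<gamma> > 0" using gamma beta_pos by simp
  have apos: "a > 0" unfolding a_def using den beta_pos by simp
  obtain N where Nne: "nonexpansive N" and TN: "T = (\<lambda>x. (1 - a) *\<^sub>R x + a *\<^sub>R N x)"
    using T_avg unfolding averaged_def a_def by blast
  have "(1 - a) *\<^sub>R zstar + a *\<^sub>R N zstar = zstar" using fixpt TN by metis
  then have "a *\<^sub>R (N zstar - zstar) = 0" by (simp add: algebra_simps)
  then have Nfix: "N zstar = zstar" using apos by simp
  have Tz: "T (z k) = xC k + (z k - xB k)" for k
    unfolding T_def xC_def xA_def xB_def by simp
  have zbound: "norm (z k - zstar) \<le> R0" for k
  proof (induction k)
    case 0 then show ?case by (simp add: R0_def)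
  next
    case (Suc k)
    have la: "0 \<le> lam k * a" "lam k * a \<le> 1"
    proof -
      show "0 \<le> lam k * a" using lam[of k] apos by simp
      have "lam k < (4 * \<beta> - \<gamma>) / (2 * \<beta>)" using lam[of k] by simp
      then have "lam k * a < (4 * \<beta> - \<gamma>) / (2 * \<beta>) * a" using apos by (rule mult_strict_right_mono)
      also have "\<dots> = 1" unfolding a_def using den beta_pos by simp
      finally show "lam k * a \<le> 1" by simp
    qed
    have "xC k - xB k = T (z k) - z k" using Tz[of k] by simp
    also have "\<dots> = a *\<^sub>R (N (z k) - z k)" using TN by (simp add: algebra_simps)
    finally have "z (Suc k) = z k + lam k *\<^sub>R (a *\<^sub>R (N (z k) - z k))"
      using z_step[of k] by simp
    then have "z (Suc k) - zstar = (1 - lam k * a) *\<^sub>R (z k - zstar) + (lam k * a) *\<^sub>R (N (z k) - N zstar)"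
      using Nfix by (simp add: algebra_simps)
    then have "norm (z (Suc k) - zstar) \<le> (1 - lam k * a) * norm (z k - zstar) + (lam k * a) * norm (N (z k) - N zstar)"
      using la by (metis (no_types, lifting) abs_of_nonneg diff_ge_0_iff_ge norm_scaleR norm_triangle_ineq)
    also have "\<dots> \<le> (1 - lam k * a) * norm (z k - zstar) + (lam k * a) * norm (z k - zstar)"
      using Nne la unfolding nonexpansive_def by (intro add_left_mono mult_left_mono) auto
    also have "\<dots> = norm (z k - zstar)" by (simp add: algebra_simps)
    finally show ?case using Suc by simp
  qed
  have R0nn: "0 \<le> R0" unfolding R0_def by simp
  have CLip: "\<beta> * norm (C x - C y) \<le> norm (x - y)" for x y
  proof -
    have "\<beta> * (norm (C x - C y))\<^sup>2 \<le> inner (C x - C y) (x - y)"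
      using coco unfolding cocoercive_def by blast
    also have "\<dots> \<le> norm (C x - C y) * norm (x - y)"
      by (rule Cauchy_Schwarz_ineq2[THEN order_trans[OF abs_ge_self]])
    finally have "norm (C x - C y) * (\<beta> * norm (C x - C y)) \<le> norm (C x - C y) * norm (x - y)"
      by (simp add: power2_eq_square algebra_simps)
    then show ?thesis by (cases "norm (C x - C y) = 0") (auto simp: mult_le_cancel_left)
  qed
  have gb: "0 \<le> \<gamma> / \<beta>" using gamma beta_pos by simp
  show ?thesis
  proof (intro allI conjI)
    fix j
    have xBb: "norm (xB j - xstar) \<le> R0"
      using res_ne[OF mmB, of "z j" zstar] zbound[of j] unfolding xB_def xstar_def by simp
    have "R0 \<le> (1 + \<gamma> / \<beta>) * R0" using mult_nonneg_nonneg[OF gb R0nn] by (simp add: algebra_simps)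
    then show "xB j \<in> cball xstar ((1 + \<gamma> / \<beta>) * norm (z 0 - zstar))"
      using xBb unfolding R0_def[symmetric] by (simp add: dist_norm norm_minus_commute)
    have "norm (xA j - xstar) \<le> norm ((2 *\<^sub>R xB j - z j - \<gamma> *\<^sub>R C (xB j)) - (2 *\<^sub>R xstar - zstar - \<gamma> *\<^sub>R C xstar))"
      using res_ne[OF mmA] xAs unfolding xA_def xAs_def JA_def by metis
    also have "(2 *\<^sub>R xB j - z j - \<gamma> *\<^sub>R C (xB j)) - (2 *\<^sub>R xstar - zstar - \<gamma> *\<^sub>R C xstar)
        = (2 *\<^sub>R (xB j - xstar) - (z j - zstar)) - \<gamma> *\<^sub>R (C (xB j) - C xstar)"
      by (simp add: algebra_simps)
    also have "norm \<dots> \<le> norm (2 *\<^sub>R (xB j - xstar) - (z j - zstar)) + norm (\<gamma> *\<^sub>R (C (xB j) - C xstar))"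
      by (rule norm_triangle_ineq4)
    also have "norm (2 *\<^sub>R (xB j - xstar) - (z j - zstar)) \<le> R0"
      using res_refl_ne[OF mmB, of "z j" zstar] zbound[of j] unfolding xB_def xstar_def by simp
    also have "norm (\<gamma> *\<^sub>R (C (xB j) - C xstar)) \<le> \<gamma> / \<beta> * R0"
    proof -
      have "\<beta> * norm (C (xB j) - C xstar) \<le> R0" using CLip[of "xB j" xstar] xBb by simp
      then have "norm (C (xB j) - C xstar) \<le> R0 / \<beta>" using beta_pos by (simp add: field_simps)
      then have "\<gamma> * norm (C (xB j) - C xstar) \<le> \<gamma> * (R0 / \<beta>)" using gamma by (intro mult_left_mono) auto
      then show ?thesis using gamma by simp
    qed
    finally show "xA j \<in> cball xstar ((1 + \<gamma> / \<beta>) * norm (z 0 - zstar))"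
      unfolding R0_def[symmetric] by (simp add: dist_norm norm_minus_commute algebra_simps)
  qed
qed

end
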